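(* Let $e\ge 1$ and $0\le p\le e$ be integers. Let $L$ and $R$ be fixed disjoint sets, each of cardinality $e$. Consider matrices $G=(m_{ij})\in\mathbb{N}^{L\times R}$, viewed as bipartite multigraphs on the vertex set $L\sqcup R$ (with $m_{ij}$ edges between $i\in L$ and $j\in R$), satisfying: (i) $\sum_{i\in L,j\in R} m_{ij}=2p$; (ii) for every $i\in L$, $l_i=\sum_{j\in R} m_{ij}\le 2$; (iii) for every $j\in R$, $c_j=\sum_{i\in L} m_{ij}\le 2$; (iv) no connected component of $G$ is a chain (path) having one endpoint in $L$ and the other endpoint in $R$. (Since all vertex degrees are at most $2$, each connected component is either a cycle or a chain.) Let $\mathcal C(G)$ denote the number of connected components of $G$ that are cycles. Define \[ \mathcal N_{e,p}^{\,\rm I}=\sum_{G}\frac{(2p)!\times 2^{\,2e-2p+\mathcal C(G)}}{\prod_{i,j}(m_{ij})!\times\prod_{i}(2-l_i)!\times\prod_{j}(2-c_j)!}, \] the sum running over all $G$ satisfying (i)–(iv). For nonnegative integers $p,q,m$ with $m\le\min\{p,q\}$ define \[ \mathcal N^{\,\rm II}_{p,q,m}=\frac{p!\,q!\,(2m)!\,(p+q-m)!\,(2p-2m)!\,(2q-2m)!}{(2p)!\,(2q)!\,m!\,(p+q-2m)!\,(p-m)!\,(q-m)!}. \] Then \[ \mathcal N_{e,p}^{\,\rm I}=\frac{(2e)!^2}{(2e-2p)!^2}\;\mathcal N^{\,\rm II}_{e,e,p}. \]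
   Context: Both quantities arise from computing the transvectant $(Q^e,Q^e)_{2p}$ of a binary quadratic form $Q$ in two ways: via a Feynman-diagram (graph) expansion, giving $(Q^e,Q^e)_{2p}$ up to normalization as $\mathcal N^{\,\rm I}_{e,p}\,Q^{2e-2p}(-\Delta)^p$, and via Dixon's summation theorem for ${}_3\mathbb F_2$ hypergeometric series, giving $(Q^e,Q^e)_{2p}=\mathcal N^{\,\rm II}_{e,e,p}\,Q^{2e-2p}(-\Delta)^p$, where $\Delta$ is the discriminant of $Q$. Comparing the two yields the stated closed formula for the weighted graph enumeration. *)

theory Defs
  imports Complex_Main
begin

text \<open>Vertices of the bipartite multigraph: (False, i) is vertex i of L = {0..<e},
  (True, j) is vertex j of R = {0..<e}; the tag makes L and R disjoint.
  A matrix G = (m i j) is a function nat => nat => nat, relevant only on i<e, j<e.\<close>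

definition gverts :: "nat \<Rightarrow> (bool \<times> nat) set" where
  "gverts e = {(b, i). i < e}"

definition rowsum :: "nat \<Rightarrow> (nat \<Rightarrow> nat \<Rightarrow> nat) \<Rightarrow> nat \<Rightarrow> nat" where
  "rowsum e m i = (\<Sum>j<e. m i j)"

definition colsum :: "nat \<Rightarrow> (nat \<Rightarrow> nat \<Rightarrow> nat) \<Rightarrow> nat \<Rightarrow> nat" where
  "colsum e m j = (\<Sum>i<e. m i j)"

definition gdeg :: "nat \<Rightarrow> (nat \<Rightarrow> nat \<Rightarrow> nat) \<Rightarrow> bool \<times> nat \<Rightarrow> nat" where
  "gdeg e m v = (if fst v then colsum e m (snd v) else rowsum e m (snd v))"

definition gadj :: "nat \<Rightarrow> (nat \<Rightarrow> nat \<Rightarrow> nat) \<Rightarrow> ((bool \<times> nat) \<times> (bool \<times> nat)) set" where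
  "gadj e m = {((False, i), (True, j)) | i j. i < e \<and> j < e \<and> 0 < m i j}
            \<union> {((True, j), (False, i)) | i j. i < e \<and> j < e \<and> 0 < m i j}"

definition gcomp :: "nat \<Rightarrow> (nat \<Rightarrow> nat \<Rightarrow> nat) \<Rightarrow> bool \<times> nat \<Rightarrow> (bool \<times> nat) set" where
  "gcomp e m v = {u \<in> gverts e. (v, u) \<in> (gadj e m)\<^sup>*}"

definition gcomps :: "nat \<Rightarrow> (nat \<Rightarrow> nat \<Rightarrow> nat) \<Rightarrow> (bool \<times> nat) set set" where
  "gcomps e m = gcomp e m ` gverts e"

text \<open>Since all degrees are at most 2, a connected component is a cycle iff all its
  vertices have degree exactly 2 (this includes a double edge i--j, a 2-cycle);
  otherwise it is a chain (possibly a single isolated vertex), whose endpoints are its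
  vertices of degree at most 1.\<close>
definition is_cycle_comp :: "nat \<Rightarrow> (nat \<Rightarrow> nat \<Rightarrow> nat) \<Rightarrow> (bool \<times> nat) set \<Rightarrow> bool" where
  "is_cycle_comp e m K = (\<forall>v\<in>K. gdeg e m v = 2)"

definition is_LR_chain :: "nat \<Rightarrow> (nat \<Rightarrow> nat \<Rightarrow> nat) \<Rightarrow> (bool \<times> nat) set \<Rightarrow> bool" where
  "is_LR_chain e m K = (\<not> is_cycle_comp e m K \<and>
     (\<exists>i. (False, i) \<in> K \<and> gdeg e m (False, i) \<le> 1) \<and>
     (\<exists>j. (True, j) \<in> K \<and> gdeg e m (True, j) \<le> 1))"

definition ncycles :: "nat \<Rightarrow> (nat \<Rightarrow> nat \<Rightarrow> nat) \<Rightarrow> nat" where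
  "ncycles e m = card {K \<in> gcomps e m. is_cycle_comp e m K}"

definition admissible :: "nat \<Rightarrow> nat \<Rightarrow> (nat \<Rightarrow> nat \<Rightarrow> nat) set" where
  "admissible e p = {m.
     (\<forall>i j. (e \<le> i \<or> e \<le> j) \<longrightarrow> m i j = 0) \<and>
     (\<Sum>i<e. \<Sum>j<e. m i j) = 2 * p \<and>
     (\<forall>i<e. rowsum e m i \<le> 2) \<and>
     (\<forall>j<e. colsum e m j \<le> 2) \<and>
     (\<forall>K\<in>gcomps e m. \<not> is_LR_chain e m K)}"

definition NI :: "nat \<Rightarrow> nat \<Rightarrow> real" where
  "NI e p = (\<Sum>m\<in>admissible e p.
     (fact (2*p) * 2 ^ (2*e - 2*p + ncycles e m)) /
     ((\<Prod>i<e. \<Prod>j<e. fact (m i j)) *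
      (\<Prod>i<e. fact (2 - rowsum e m i)) *
      (\<Prod>j<e. fact (2 - colsum e m j))))"

definition NII :: "nat \<Rightarrow> nat \<Rightarrow> nat \<Rightarrow> real" where
  "NII p q m = (fact p * fact q * fact (2*m) * fact (p+q-m) * fact (2*p-2*m) * fact (2*q-2*m)) /
     (fact (2*p) * fact (2*q) * fact m * fact (p+q-2*m) * fact (p-m) * fact (q-m))"

end

theory Submission
  imports Defs "HOL-Computational_Algebra.Formal_Power_Series"
begin


lemma rising_vandermonde:
  fixes x y :: real
  shows "(\<Sum>k\<le>p. pochhammer x k * pochhammer y (p-k) / (fact k * fact (p-k))) = pochhammer (x+y) p / fact p"
proof -
  have "(\<Sum>k\<le>p. pochhammer x k * pochhammer y (p-k) / (fact k * fact (p-k)))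
      = (\<Sum>k\<le>p. (-1)^p * (((-x) gchoose k) * ((-y) gchoose (p-k))))"
  proof (rule sum.cong[OF refl])
    fix k assume "k \<in> {..p}"
    then have kp: "k \<le> p" by simp
    have m: "(-1::real)^p = (-1)^k * (-1)^(p-k)" using kp by (simp add: power_add[symmetric])
    have s1: "((-1::real)^p) * ((-1)^k * (-1)^(p-k)) = 1"
      unfolding m[symmetric] by (simp add: power_add[symmetric] mult_2[symmetric] power_mult[symmetric])
    have "(-1::real)^p * (((-x) gchoose k) * ((-y) gchoose (p-k)))
       = ((-1)^p * ((-1)^k * (-1)^(p-k))) * (pochhammer x k * pochhammer y (p-k) / (fact k * fact (p-k)))"
      by (simp add: gbinomial_pochhammer)
    then show "pochhammer x k * pochhammer y (p-k) / (fact k * fact (p-k)) = (-1)^p * (((-x) gchoose k) * ((-y) gchoose (p-k)))"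
      unfolding s1 by simp
  qed
  also have "\<dots> = (-1)^p * ((-x + -y) gchoose p)"
    using gbinomial_Vandermonde[of "-x" "-y" p] by (simp add: sum_distrib_left[symmetric] atLeast0AtMost)
  also have "\<dots> = pochhammer (x+y) p / fact p"
    by (simp add: gbinomial_pochhammer add.commute)
  finally show ?thesis .
qed

lemma identD:
  assumes "p \<le> e"
  shows "(\<Sum>k\<le>p. real (e choose k) * real (e choose (p-k)) * fact (2*(e-k)) * fact (2*(e-p+k)))
     = 4^p * fact e^2 * fact (2*e-p) * fact (2*e-2*p) / (fact p * fact (e-p)^2)"
proof -
  define c where "c = e - p"
  define x :: real where "x = real c + 1/2"
  define P :: real where "P = pochhammer (1/2) c"
  have e: "e = c + p" using assms c_def by simp
  have trm: "real (e choose k) * real (e choose (p-k)) * fact (2*(e-k)) * fact (2*(e-p+k))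
     = fact e^2 * 4^(2*e-p) * P^2 * (pochhammer x k * pochhammer x (p-k) / (fact k * fact (p-k)))"
    if kp: "k \<le> p" for k
  proof -
    have h1: "real (e choose k) * fact (2*(e-k)) = fact e * 4^(e-k) * P * pochhammer x (p-k) / fact k"
    proof -
      have "real (e choose k) = fact e / (fact k * fact (e-k))"
        using kp e by (simp add: binomial_fact)
      moreover have "(fact (2*(e-k))::real) = 4^(e-k) * pochhammer (1/2) (e-k) * fact (e-k)"
        using fact_double[of "e-k"] by (simp add: power_mult)
      moreover have "pochhammer (1/2::real) (e-k) = P * pochhammer x (p-k)"
        proof -
        have "c + p - k = c + (p-k)" using kp by simp
        then show ?thesis unfolding P_def x_def e
          by (simp add: pochhammer_product' add.commute)
      qed
      ultimately show ?thesis by (simp add: power_mult field_simps)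
    qed
    have h2: "real (e choose (p-k)) * fact (2*(e-p+k)) = fact e * 4^(c+k) * P * pochhammer x k / fact (p-k)"
    proof -
      have "real (e choose (p-k)) = fact e / (fact (p-k) * fact (e-(p-k)))"
        using kp e by (simp add: binomial_fact)
      moreover have "(fact (2*(e-p+k))::real) = 4^(e-p+k) * pochhammer (1/2) (e-p+k) * fact (e-p+k)"
      proof -
        have q: "(2::real)^(2*(e-p+k)) = 4^(e-p+k)" by (simp only: power_mult) simp
        show ?thesis using fact_double[of "e-p+k", where 'a=real] unfolding q .
      qed
      moreover have "pochhammer (1/2::real) (e-p+k) = P * pochhammer x k"
        unfolding P_def x_def e
        by (simp add: pochhammer_product' add.commute)
      moreover have "e-(p-k) = e-p+k" using kp e by simp
      ultimately show ?thesis using e by (simp add: power_mult field_simps)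
    qed
    have "real (e choose k) * real (e choose (p-k)) * fact (2*(e-k)) * fact (2*(e-p+k))
       = (real (e choose k) * fact (2*(e-k))) * (real (e choose (p-k)) * fact (2*(e-p+k)))" by simp
    also have "\<dots> = fact e^2 * (4^(e-k) * 4^(c+k)) * P^2 * (pochhammer x k * pochhammer x (p-k) / (fact k * fact (p-k)))"
      unfolding h1 h2 by (simp add: power2_eq_square field_simps)
    also have "(4::real)^(e-k) * 4^(c+k) = 4^(2*e-p)"
      using kp e by (simp add: power_add[symmetric])
    finally show ?thesis .
  qed
  have "(\<Sum>k\<le>p. real (e choose k) * real (e choose (p-k)) * fact (2*(e-k)) * fact (2*(e-p+k)))
     = fact e^2 * 4^(2*e-p) * P^2 * (\<Sum>k\<le>p. pochhammer x k * pochhammer x (p-k) / (fact k * fact (p-k)))"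
    unfolding sum_distrib_left by (rule sum.cong[OF refl]) (use trm in auto)
  also have "\<dots> = fact e^2 * 4^(2*e-p) * P^2 * (pochhammer (2*real c + 1) p / fact p)"
    unfolding rising_vandermonde x_def by (simp add: algebra_simps)
  also have "\<dots> = 4^p * fact e^2 * fact (2*e-p) * fact (2*e-2*p) / (fact p * fact (e-p)^2)"
  proof -
    have f1: "(fact (2*c+p)::real) = fact (2*c) * pochhammer (2*real c + 1) p"
    proof -
      have "pochhammer (1::real) (2*c+p) = pochhammer 1 (2*c) * pochhammer (1 + of_nat (2*c)) p"
        by (rule pochhammer_product')
      then show ?thesis unfolding pochhammer_fact[symmetric] by (simp add: add.commute)
    qed
    have f2: "(fact (2*c)::real) = 4^c * P * fact c"
      unfolding P_def using fact_double[of c] by (simp add: power_mult)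
    have "2*e-p = 2*c+p" "2*e-2*p = 2*c" "e-p = c" using e by auto
    then have "4^p * fact e^2 * fact (2*e-p) * fact (2*e-2*p) / (fact p * fact (e-p)^2)
       = 4^p * fact e^2 * (fact (2*c) * pochhammer (2*real c + 1) p) * (4^c * P * fact c) / (fact p * fact c^2 :: real)"
      using f1 f2 by simp
    also have "\<dots> = 4^p * 4^(2*c) * fact e^2 * P^2 * pochhammer (2*real c + 1) p / fact p"
      using f2 by (simp add: power_mult power2_eq_square field_simps)
    also have "(4::real)^p * 4^(2*c) = 4^(2*e-p)" using e by (simp add: power_add[symmetric])
    finally show ?thesis by (simp add: field_simps)
  qed
  finally show ?thesis .
qed


lemma finite_vecs:
  assumes "finite B"
  shows "finite {h::'b\<Rightarrow>nat. \<forall>b. (b \<notin> B \<longrightarrow> h b = 0) \<and> h b \<le> M}"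
proof -
  have "finite {h::'b\<Rightarrow>nat. \<forall>x. (x \<in> B \<longrightarrow> h x \<in> {..M}) \<and> (x \<notin> B \<longrightarrow> h x = 0)}"
    by (rule finite_set_of_finite_funs) (use assms in auto)
  then show ?thesis by (rule finite_subset[rotated]) auto
qed

lemma finite_mats:
  assumes "finite A" "finite B"
  shows "finite {g::'a\<Rightarrow>'b\<Rightarrow>nat. \<forall>a b. ((a \<notin> A \<or> b \<notin> B) \<longrightarrow> g a b = 0) \<and> g a b \<le> M}"
proof -
  let ?R = "{h::'b\<Rightarrow>nat. \<forall>b. (b \<notin> B \<longrightarrow> h b = 0) \<and> h b \<le> M}"
  have "finite {g::'a\<Rightarrow>'b\<Rightarrow>nat. \<forall>x. (x \<in> A \<longrightarrow> g x \<in> ?R) \<and> (x \<notin> A \<longrightarrow> g x = (\<lambda>_. 0))}"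
    by (rule finite_set_of_finite_funs) (use assms finite_vecs in auto)
  then show ?thesis by (rule finite_subset[rotated]) auto
qed

definition VS :: "'b set \<Rightarrow> nat \<Rightarrow> ('b \<Rightarrow> nat) set" where
  "VS B w = {v. (\<forall>b. b \<notin> B \<longrightarrow> v b = 0) \<and> (\<Sum>b\<in>B. v b) = w}"

lemma finite_VS: assumes "finite B" shows "finite (VS B w)"
proof -
  have "VS B w \<subseteq> {h. \<forall>b. (b \<notin> B \<longrightarrow> h b = 0) \<and> h b \<le> w}"
  proof (clarsimp simp: VS_def)
    fix v b assume "\<forall>b. b \<notin> B \<longrightarrow> v b = 0" "w = (\<Sum>b\<in>B. v b)"
    then show "v b \<le> (\<Sum>b\<in>B. v b)"
      by (cases "b \<in> B") (auto intro: member_le_sum assms)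
  qed
  then show ?thesis using finite_vecs[OF assms] by (rule finite_subset)
qed

lemma VS_insert_sum:
  assumes "finite B" "a \<notin> B"
  shows "(\<Sum>v\<in>VS (insert a B) w. f v) = (\<Sum>k\<le>w. \<Sum>v\<in>VS B (w-k). f (v(a:=k)))"
proof -
  have "(\<Sum>k\<le>w. \<Sum>v\<in>VS B (w-k). f (v(a:=k))) = (\<Sum>(k,v)\<in>Sigma {..w} (\<lambda>k. VS B (w-k)). f (v(a:=k)))"
    by (rule sum.Sigma) (auto intro: finite_VS assms)
  also have "\<dots> = (\<Sum>v\<in>VS (insert a B) w. f v)"
  proof (rule sum.reindex_bij_witness[where i="\<lambda>v. (v a, v(a:=0))" and j="\<lambda>(k,v). v(a:=k)"])
    fix kv assume "kv \<in> Sigma {..w} (\<lambda>k. VS B (w-k))"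
    then obtain k v where kv: "kv = (k,v)" "k \<le> w" "v \<in> VS B (w-k)" by auto
    then have v0: "v a = 0" using assms by (auto simp: VS_def)
    have sB: "(\<Sum>b\<in>B. (v(a:=k)) b) = (\<Sum>b\<in>B. v b)"
      by (rule sum.cong) (use assms in auto)
    show "(\<lambda>v. (v a, v(a:=0))) ((\<lambda>(k,v). v(a:=k)) kv) = kv"
      using kv v0 by auto
    show "(\<lambda>(k,v). v(a:=k)) kv \<in> VS (insert a B) w"
      using kv sB assms by (auto simp: VS_def)
    show "f ((\<lambda>(k,v). v(a:=k)) kv) = (\<lambda>(k,v). f (v(a:=k))) kv"
      using kv by simp
  next
    fix v assume v: "v \<in> VS (insert a B) w"
    have sB: "(\<Sum>b\<in>B. (v(a:=0)) b) = (\<Sum>b\<in>B. v b)"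
      by (rule sum.cong) (use assms in auto)
    have "(\<Sum>b\<in>insert a B. v b) = w" using v by (simp add: VS_def)
    then have "v a + (\<Sum>b\<in>B. v b) = w" using assms by simp
    then show "(\<lambda>(k, v). v(a := k)) (v a, v(a := 0)) = v" by simp
    show "(v a, v(a := 0)) \<in> Sigma {..w} (\<lambda>k. VS B (w - k))"
      using v sB \<open>v a + (\<Sum>b\<in>B. v b) = w\<close> by (auto simp: VS_def)
  qed
  finally show ?thesis by simp
qed

lemma multi_vandermonde:
  assumes "finite B"
  shows "(\<Sum>v\<in>VS B w. \<Prod>b\<in>B. (s b choose v b)) = (\<Sum>b\<in>B. s b) choose w"
  using assms
proof (induction B arbitrary: w rule: finite_induct)
  case empty
  have "VS {} w = (if w = 0 then {\<lambda>_. 0} else {})" by (auto simp: VS_def)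
  then show ?case unfolding \<open>VS {} w = _\<close> by (cases "w=0") auto
next
  case (insert a B)
  have "(\<Sum>v\<in>VS (insert a B) w. \<Prod>b\<in>insert a B. (s b choose v b))
     = (\<Sum>k\<le>w. \<Sum>v\<in>VS B (w-k). \<Prod>b\<in>insert a B. (s b choose (v(a:=k)) b))"
    by (rule VS_insert_sum) (use insert in auto)
  also have "\<dots> = (\<Sum>k\<le>w. (s a choose k) * (\<Sum>v\<in>VS B (w-k). \<Prod>b\<in>B. (s b choose v b)))"
  proof (rule sum.cong[OF refl])
    fix k assume "k \<in> {..w}"
    have "(\<Prod>b\<in>insert a B. (s b choose (v(a:=k)) b)) = (s a choose k) * (\<Prod>b\<in>B. (s b choose v b))" for v
    proof -
      have "(\<Prod>b\<in>B. (s b choose (v(a:=k)) b)) = (\<Prod>b\<in>B. (s b choose v b))"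
        by (rule prod.cong) (use insert in auto)
      then show ?thesis using insert by simp
    qed
    then show "(\<Sum>v\<in>VS B (w-k). \<Prod>b\<in>insert a B. (s b choose (v(a:=k)) b)) = (s a choose k) * (\<Sum>v\<in>VS B (w-k). \<Prod>b\<in>B. (s b choose v b))"
      by (simp add: sum_distrib_left)
  qed
  also have "\<dots> = (\<Sum>k\<le>w. (s a choose k) * ((\<Sum>b\<in>B. s b) choose (w-k)))"
    using insert by simp
  also have "\<dots> = (s a + (\<Sum>b\<in>B. s b)) choose w" by (rule vandermonde)
  finally show ?case using insert by simp
qed

definition Gset :: "'a set \<Rightarrow> 'b set \<Rightarrow> ('a \<Rightarrow> nat) \<Rightarrow> ('b \<Rightarrow> nat) \<Rightarrow> ('a \<Rightarrow> 'b \<Rightarrow> nat) set" where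
  "Gset A B t s = {g. (\<forall>a b. (a \<notin> A \<or> b \<notin> B) \<longrightarrow> g a b = 0) \<and> (\<forall>a\<in>A. (\<Sum>b\<in>B. g a b) = t a)
      \<and> (\<forall>b\<in>B. (\<Sum>a\<in>A. g a b) \<le> s b)}"

definition wB :: "'a set \<Rightarrow> 'b set \<Rightarrow> ('b \<Rightarrow> nat) \<Rightarrow> ('a \<Rightarrow> 'b \<Rightarrow> nat) \<Rightarrow> real" where
  "wB A B s g = 1 / ((\<Prod>a\<in>A. \<Prod>b\<in>B. fact (g a b)) * (\<Prod>b\<in>B. fact (s b - (\<Sum>a\<in>A. g a b))))"

lemma finite_Gset:
  assumes "finite A" "finite B"
  shows "finite (Gset A B t s)"
proof -
  have "Gset A B t s \<subseteq> {g. \<forall>a b. ((a \<notin> A \<or> b \<notin> B) \<longrightarrow> g a b = 0) \<and> g a b \<le> (\<Sum>a\<in>A. t a)}"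
  proof (clarsimp simp: Gset_def)
    fix g a b
    assume z: "\<forall>a b. (a \<in> A \<longrightarrow> b \<notin> B) \<longrightarrow> g a b = 0" and r: "\<forall>a\<in>A. (\<Sum>b\<in>B. g a b) = t a"
    show "g a b \<le> (\<Sum>a\<in>A. t a)"
    proof (cases "a \<in> A \<and> b \<in> B")
      case True
      then have "g a b \<le> (\<Sum>b\<in>B. g a b)" by (intro member_le_sum) (use assms in auto)
      also have "\<dots> = t a" using r True by auto
      also have "\<dots> \<le> (\<Sum>a\<in>A. t a)" using True by (intro member_le_sum) (use assms in auto)
      finally show ?thesis .
    qed (use z in auto)
  qed
  then show ?thesis using finite_mats[OF assms] by (rule finite_subset)
qed

lemma block_sum:
  assumes "finite A" "finite B"
  shows "(\<Sum>g\<in>Gset A B t s. wB A B s g) =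
    (if (\<Sum>a\<in>A. t a) \<le> (\<Sum>b\<in>B. s b)
     then fact (\<Sum>b\<in>B. s b) / (fact ((\<Sum>b\<in>B. s b) - (\<Sum>a\<in>A. t a)) * (\<Prod>b\<in>B. fact (s b)) * (\<Prod>a\<in>A. fact (t a)))
     else 0)"
  using assms(1)
proof (induction A arbitrary: s rule: finite_induct)
  case empty
  have "Gset {} B t s = {\<lambda>_ _. 0}" by (auto simp: Gset_def)
  then show ?case by (simp add: wB_def)
next
  case (insert a A)
  define V where "V = {v \<in> VS B (t a). \<forall>b\<in>B. v b \<le> s b}"
  define S where "S = (\<Sum>b\<in>B. s b)"
  define TA where "TA = (\<Sum>a\<in>A. t a)"
  have finV: "finite V" unfolding V_def using finite_VS[OF assms(2)] by simp
  have "(\<Sum>g\<in>Gset (insert a A) B t s. wB (insert a A) B s g)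
      = (\<Sum>(v,g)\<in>Sigma V (\<lambda>v. Gset A B t (\<lambda>b. s b - v b)). wB (insert a A) B s (g(a:=v)))"
  proof (rule sum.reindex_bij_witness[where i="\<lambda>g. (g a, g(a:=(\<lambda>_. 0)))" and j="\<lambda>(v,g). g(a:=v)", symmetric])
    fix vg assume "vg \<in> Sigma V (\<lambda>v. Gset A B t (\<lambda>b. s b - v b))"
    then obtain v g where vg: "vg = (v,g)" "v \<in> V" "g \<in> Gset A B t (\<lambda>b. s b - v b)" by auto
    have ga: "g a = (\<lambda>_. 0)" using vg insert.hyps by (auto simp: Gset_def)
    show "(\<lambda>g. (g a, g(a:=(\<lambda>_. 0)))) ((\<lambda>(v,g). g(a:=v)) vg) = vg" using vg ga by auto
    show "wB (insert a A) B s ((\<lambda>(v,g). g(a:=v)) vg) = (\<lambda>(v,g). wB (insert a A) B s (g(a:=v))) vg"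
      using vg by simp
    have cs: "(\<Sum>a'\<in>A. (g(a:=v)) a' b) = (\<Sum>a'\<in>A. g a' b)" for b
      by (rule sum.cong) (use insert.hyps in auto)
    have rs: "(\<Sum>b\<in>B. (g(a:=v)) a' b) = (\<Sum>b\<in>B. g a' b)" if "a' \<in> A" for a'
      using that insert.hyps by auto
    show "(\<lambda>(v,g). g(a:=v)) vg \<in> Gset (insert a A) B t s"
      using vg insert.hyps cs rs unfolding Gset_def V_def VS_def
      by (auto simp: le_diff_conv2 add.commute)
  next
    fix g assume g: "g \<in> Gset (insert a A) B t s"
    show "(\<lambda>(v,g). g(a:=v)) ((\<lambda>g. (g a, g(a:=(\<lambda>_. 0)))) g) = g" by auto
    have cs: "(\<Sum>a'\<in>A. (g(a:=(\<lambda>_. 0))) a' b) = (\<Sum>a'\<in>A. g a' b)" for b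
      by (rule sum.cong) (use insert.hyps in auto)
    have col: "g a b + (\<Sum>a'\<in>A. g a' b) \<le> s b" if "b \<in> B" for b
      using g that insert.hyps by (auto simp: Gset_def)
    have "g a \<in> V" using g col insert.hyps unfolding V_def VS_def Gset_def
      by (auto intro: order_trans[OF le_add1])
    moreover have col2: "(\<Sum>a'\<in>A. g a' b) \<le> s b - g a b" if "b \<in> B" for b
      using col[OF that] by linarith
    moreover have "g(a:=(\<lambda>_. 0)) \<in> Gset A B t (\<lambda>b. s b - g a b)"
      using g col2 cs insert.hyps unfolding Gset_def by auto
    ultimately show "(\<lambda>g. (g a, g(a:=(\<lambda>_. 0)))) g \<in> Sigma V (\<lambda>v. Gset A B t (\<lambda>b. s b - v b))" by auto
  qed
  also have "\<dots> = (\<Sum>v\<in>V. \<Sum>g\<in>Gset A B t (\<lambda>b. s b - v b). (1 / (\<Prod>b\<in>B. fact (v b))) * wB A B (\<lambda>b. s b - v b) g)"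
  proof -
    have w: "wB (insert a A) B s (g(a:=v)) = (1 / (\<Prod>b\<in>B. fact (v b))) * wB A B (\<lambda>b. s b - v b) g"
      if "v \<in> V" "g \<in> Gset A B t (\<lambda>b. s b - v b)" for v g
    proof -
      have p1: "(\<Prod>a'\<in>A. \<Prod>b\<in>B. fact ((g(a:=v)) a' b)) = (\<Prod>a'\<in>A. \<Prod>b\<in>B. fact (g a' b) :: real)"
        by (rule prod.cong) (use insert.hyps in auto)
      have cs: "(\<Sum>a'\<in>A. (g(a:=v)) a' b) = (\<Sum>a'\<in>A. g a' b)" for b
        by (rule sum.cong) (use insert.hyps in auto)
      have p2: "(\<Prod>b\<in>B. fact (s b - (\<Sum>a'\<in>insert a A. (g(a:=v)) a' b))) = (\<Prod>b\<in>B. fact (s b - v b - (\<Sum>a'\<in>A. g a' b)) :: real)"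
        by (rule prod.cong) (use insert.hyps cs in auto)
      show ?thesis unfolding wB_def using insert.hyps p1 p2 by simp
    qed
    show ?thesis
      by (subst sum.Sigma[symmetric]) (use finV finite_Gset[OF insert.hyps(1) assms(2)] w in auto)
  qed
  also have "\<dots> = (\<Sum>v\<in>V. (if TA + t a \<le> S then fact (S - t a) / (fact (S - (TA + t a)) * (\<Prod>a\<in>A. fact (t a))) / (\<Prod>b\<in>B. fact (s b))
        * real (\<Prod>b\<in>B. (s b choose v b)) else 0))"
  proof (rule sum.cong[OF refl])
    fix v assume v: "v \<in> V"
    have vle: "\<forall>b\<in>B. v b \<le> s b" and vs: "(\<Sum>b\<in>B. v b) = t a" using v by (auto simp: V_def VS_def)
    have Sv: "(\<Sum>b\<in>B. s b - v b) = S - t a" unfolding S_def using vle vs by (simp add: sum_subtractf_nat)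
    have taS: "t a \<le> S" unfolding S_def using vle vs by (metis sum_mono)
    have ch: "(\<Prod>b\<in>B. fact (s b - v b) :: real) * (\<Prod>b\<in>B. fact (v b)) = (\<Prod>b\<in>B. fact (s b)) / real (\<Prod>b\<in>B. (s b choose v b))"
    proof -
      have "fact (s b - v b) * fact (v b) = (fact (s b) :: real) / real (s b choose v b)" if "b \<in> B" for b
        using vle that by (simp add: binomial_fact field_simps)
      then show ?thesis by (simp add: prod.distrib[symmetric] prod_dividef of_nat_prod)
    qed
    have ch': "(\<Prod>b\<in>B. fact (s b) :: real) = (\<Prod>b\<in>B. fact (v b)) * ((\<Prod>b\<in>B. fact (s b - v b)) * real (\<Prod>b\<in>B. (s b choose v b)))"
    proof -
      have "(\<Prod>b\<in>B. fact (s b) :: real) = (\<Prod>b\<in>B. fact (v b) * (fact (s b - v b) * real (s b choose v b)))"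
        by (rule prod.cong[OF refl]) (use vle in \<open>simp add: binomial_fact field_simps\<close>)
      then show ?thesis by (simp add: prod.distrib of_nat_prod)
    qed
    have chpos: "real (\<Prod>b\<in>B. (s b choose v b)) \<noteq> 0"
      using vle by (simp add: prod_zero_iff assms(2) not_less)
    show "(\<Sum>g\<in>Gset A B t (\<lambda>b. s b - v b). (1 / (\<Prod>b\<in>B. fact (v b))) * wB A B (\<lambda>b. s b - v b) g)
      = (if TA + t a \<le> S then fact (S - t a) / (fact (S - (TA + t a)) * (\<Prod>a\<in>A. fact (t a))) / (\<Prod>b\<in>B. fact (s b))
        * real (\<Prod>b\<in>B. (s b choose v b)) else 0)"
      unfolding sum_distrib_left[symmetric] insert.IH Sv TA_def[symmetric]
      using taS chpos by (auto simp: field_simps ch')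
  qed
  also have "\<dots> = (if TA + t a \<le> S then fact (S - t a) / (fact (S - (TA + t a)) * (\<Prod>a\<in>A. fact (t a))) / (\<Prod>b\<in>B. fact (s b))
        * real (\<Sum>v\<in>V. \<Prod>b\<in>B. (s b choose v b)) else 0)"
    by (simp add: sum_distrib_left)
  also have "(\<Sum>v\<in>V. \<Prod>b\<in>B. (s b choose v b)) = S choose t a"
  proof -
    have "(\<Sum>v\<in>V. \<Prod>b\<in>B. (s b choose v b)) = (\<Sum>v\<in>VS B (t a). \<Prod>b\<in>B. (s b choose v b))"
    proof (rule sum.mono_neutral_left[OF finite_VS[OF assms(2)]])
      show "V \<subseteq> VS B (t a)" by (auto simp: V_def)
      show "\<forall>v\<in>VS B (t a) - V. (\<Prod>b\<in>B. s b choose v b) = 0"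
        by (auto simp: V_def prod_zero_iff assms(2) not_le)
    qed
    also have "\<dots> = S choose t a" unfolding S_def by (rule multi_vandermonde[OF assms(2)])
    finally show ?thesis .
  qed
  finally show ?case
    using insert.hyps unfolding S_def[symmetric]
    by (auto simp: binomial_fact field_simps add.commute TA_def)
qed



definition colr :: "nat set \<Rightarrow> nat set \<Rightarrow> bool \<times> nat \<Rightarrow> bool" where
  "colr X Y v = (if fst v then snd v \<in> Y else snd v \<in> X)"

definition good :: "nat \<Rightarrow> (nat \<Rightarrow> nat \<Rightarrow> nat) \<Rightarrow> nat set \<times> nat set \<Rightarrow> bool" where
  "good e m XY = (fst XY \<subseteq> {..<e} \<and> snd XY \<subseteq> {..<e} \<and>
     (\<forall>i<e. \<forall>j<e. 0 < m i j \<longrightarrow> (i \<in> fst XY \<longleftrightarrow> j \<in> snd XY)) \<and>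
     (\<forall>i<e. rowsum e m i < 2 \<longrightarrow> i \<in> fst XY) \<and>
     (\<forall>j<e. colsum e m j < 2 \<longrightarrow> j \<notin> snd XY))"

lemma gadj_sym: "(u,w) \<in> gadj e m \<Longrightarrow> (w,u) \<in> gadj e m"
  by (auto simp: gadj_def)

lemma gadj_verts: "(u,w) \<in> gadj e m \<Longrightarrow> u \<in> gverts e \<and> w \<in> gverts e"
  by (auto simp: gadj_def gverts_def)

lemma rtr_sym: "(u,w) \<in> (gadj e m)\<^sup>* \<Longrightarrow> (w,u) \<in> (gadj e m)\<^sup>*"
proof (induction rule: rtrancl_induct)
  case base then show ?case by simp
next
  case (step y z)
  then show ?case using gadj_sym by (meson converse_rtrancl_into_rtrancl)
qed

lemma finite_gverts: "finite (gverts e)"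
proof -
  have "gverts e \<subseteq> UNIV \<times> {..<e}" by (auto simp: gverts_def)
  then show ?thesis by (rule finite_subset) simp
qed

lemma gcomp_self: "v \<in> gverts e \<Longrightarrow> v \<in> gcomp e m v"
  by (simp add: gcomp_def)

lemma gcomp_sub: "gcomp e m v \<subseteq> gverts e"
  by (auto simp: gcomp_def)

lemma gcomp_eq: "w \<in> gcomp e m v \<Longrightarrow> gcomp e m w = gcomp e m v"
proof -
  assume "w \<in> gcomp e m v"
  then have vw: "(v,w) \<in> (gadj e m)\<^sup>*" by (simp add: gcomp_def)
  then have wv: "(w,v) \<in> (gadj e m)\<^sup>*" by (rule rtr_sym)
  show ?thesis unfolding gcomp_def using vw wv by (auto intro: rtrancl_trans)
qed

lemma gcomp_adj: "(u,w) \<in> gadj e m \<Longrightarrow> gcomp e m u = gcomp e m w"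
proof -
  assume a: "(u,w) \<in> gadj e m"
  then have "w \<in> gcomp e m u" using gadj_verts by (auto simp: gcomp_def)
  then show ?thesis by (rule gcomp_eq[symmetric])
qed

lemma good_adj:
  assumes "good e m (X,Y)" "(u,w) \<in> gadj e m"
  shows "colr X Y u = colr X Y w"
  using assms by (auto simp: good_def gadj_def colr_def)

lemma good_rtr:
  assumes "good e m (X,Y)" "(u,w) \<in> (gadj e m)\<^sup>*"
  shows "colr X Y u = colr X Y w"
  using assms(2)
proof (induction rule: rtrancl_induct)
  case (step y z) then show ?case using good_adj[OF assms(1)] by simp
qed simp

lemma good_comp:
  assumes "good e m (X,Y)" "w \<in> gcomp e m v"
  shows "colr X Y w = colr X Y v"
proof -
  have "(v,w) \<in> (gadj e m)\<^sup>*" using assms(2) by (simp add: gcomp_def)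
  then show ?thesis using good_rtr[OF assms(1)] by metis
qed

lemma low_L:
  assumes "good e m (X,Y)" "(False,i) \<in> gverts e" "gdeg e m (False,i) \<le> 1"
  shows "colr X Y (False,i)"
  using assms by (auto simp: good_def colr_def gdeg_def gverts_def)

lemma low_R:
  assumes "good e m (X,Y)" "(True,j) \<in> gverts e" "gdeg e m (True,j) \<le> 1"
  shows "\<not> colr X Y (True,j)"
  using assms by (auto simp: good_def colr_def gdeg_def gverts_def)

lemma deg_le2:
  assumes "\<forall>i<e. rowsum e m i \<le> 2" "\<forall>j<e. colsum e m j \<le> 2" "v \<in> gverts e"
  shows "gdeg e m v \<le> 2"
  using assms by (cases v) (auto simp: gdeg_def gverts_def)

lemma noncycle_low:
  assumes "\<forall>i<e. rowsum e m i \<le> 2" "\<forall>j<e. colsum e m j \<le> 2"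
    and "\<not> is_cycle_comp e m (gcomp e m v)"
  shows "\<exists>w\<in>gcomp e m v. gdeg e m w \<le> 1"
proof -
  obtain w where w: "w \<in> gcomp e m v" "gdeg e m w \<noteq> 2" using assms(3) by (auto simp: is_cycle_comp_def)
  then have "w \<in> gverts e" using gcomp_sub by blast
  then have "gdeg e m w \<le> 2" using deg_le2 assms by blast
  then show ?thesis using w by force
qed

lemma LR_no_good:
  assumes "K \<in> gcomps e m" "is_LR_chain e m K"
  shows "\<not> good e m XY"
proof
  assume g: "good e m XY"
  obtain X Y where XY: "XY = (X,Y)" by fastforce
  obtain v where v: "v \<in> gverts e" "K = gcomp e m v" using assms(1) by (auto simp: gcomps_def)
  obtain i j where ij: "(False,i) \<in> K" "gdeg e m (False,i) \<le> 1" "(True,j) \<in> K" "gdeg e m (True,j) \<le> 1"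
    using assms(2) by (auto simp: is_LR_chain_def)
  have "colr X Y (False,i)" using low_L[of e m X Y i] g XY ij gcomp_sub v by blast
  moreover have "\<not> colr X Y (True,j)" using low_R[of e m X Y j] g XY ij gcomp_sub v by blast
  moreover have "colr X Y (False,i) = colr X Y v" "colr X Y (True,j) = colr X Y v"
    using good_comp[of e m X Y] g XY ij v by auto
  ultimately show False by simp
qed

definition cycs :: "nat \<Rightarrow> (nat \<Rightarrow> nat \<Rightarrow> nat) \<Rightarrow> (bool \<times> nat) set set" where
  "cycs e m = {K \<in> gcomps e m. is_cycle_comp e m K}"

definition colZ :: "nat \<Rightarrow> (nat \<Rightarrow> nat \<Rightarrow> nat) \<Rightarrow> (bool \<times> nat) set set \<Rightarrow> bool \<times> nat \<Rightarrow> bool" where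
  "colZ e m Z v = (if gcomp e m v \<in> cycs e m then gcomp e m v \<in> Z
      else (\<exists>i. (False,i) \<in> gcomp e m v \<and> gdeg e m (False,i) \<le> 1))"

lemma colZ_comp: "w \<in> gcomp e m v \<Longrightarrow> colZ e m Z w = colZ e m Z v"
  by (simp add: colZ_def gcomp_eq)

lemma good_count:
  assumes hr: "\<forall>i<e. rowsum e m i \<le> 2" and hc: "\<forall>j<e. colsum e m j \<le> 2"
  shows "card {XY. good e m XY} = (if \<forall>K\<in>gcomps e m. \<not> is_LR_chain e m K then 2 ^ ncycles e m else 0)"
proof (cases "\<forall>K\<in>gcomps e m. \<not> is_LR_chain e m K")
  case False
  then have "{XY. good e m XY} = {}" using LR_no_good by blast
  then show ?thesis using False by (simp only: if_False card.empty)
next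
  case True
  define phi where "phi = (\<lambda>XY. {K \<in> cycs e m. \<exists>v\<in>K. colr (fst XY) (snd XY) v})"
  define psi where "psi = (\<lambda>Z. ({i. i < e \<and> colZ e m Z (False,i)}, {j. j < e \<and> colZ e m Z (True,j)}))"
  have fincyc: "finite (cycs e m)"
    unfolding cycs_def gcomps_def using finite_gverts by simp
  have "bij_betw phi {XY. good e m XY} (Pow (cycs e m))"
  proof (rule bij_betw_byWitness[where f'=psi])
    show "phi ` {XY. good e m XY} \<subseteq> Pow (cycs e m)" by (auto simp: phi_def)
    show "\<forall>Z\<in>Pow (cycs e m). phi (psi Z) = Z"
    proof
      fix Z assume Z: "Z \<in> Pow (cycs e m)"
      have "K \<in> phi (psi Z) \<longleftrightarrow> K \<in> Z" for K
      proof
        assume "K \<in> phi (psi Z)"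
        then obtain w where K: "K \<in> cycs e m" "w \<in> K" "colr (fst (psi Z)) (snd (psi Z)) w"
          by (auto simp: phi_def)
        obtain v where v: "v \<in> gverts e" "K = gcomp e m v" using K(1) by (auto simp: cycs_def gcomps_def)
        have wK: "gcomp e m w = K" using K(2) v gcomp_eq by blast
        have wv: "w \<in> gverts e" using K(2) v gcomp_sub by blast
        have "colZ e m Z w" using K(3) wv by (cases w; cases "fst w") (auto simp: psi_def colr_def gverts_def)
        then show "K \<in> Z" using wK K(1) by (simp add: colZ_def)
      next
        assume KZ: "K \<in> Z"
        then have K: "K \<in> cycs e m" using Z by auto
        obtain v where v: "v \<in> gverts e" "K = gcomp e m v" using K by (auto simp: cycs_def gcomps_def)
        have "colZ e m Z v" using K KZ v by (simp add: colZ_def)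
        then have "colr (fst (psi Z)) (snd (psi Z)) v" using v(1)
          by (cases v; cases "fst v") (auto simp: psi_def colr_def gverts_def)
        then show "K \<in> phi (psi Z)" using K v gcomp_self unfolding phi_def by blast
      qed
      then show "phi (psi Z) = Z" by blast
    qed
    have gpsi: "good e m (psi Z)" if Z: "Z \<subseteq> cycs e m" for Z
    proof -
      have edge: "colZ e m Z (False,i) = colZ e m Z (True,j)" if "i<e" "j<e" "0 < m i j" for i j
      proof -
        have "((False,i),(True,j)) \<in> gadj e m" using that by (auto simp: gadj_def)
        then show ?thesis by (simp add: colZ_def gcomp_adj)
      qed
      have rowL: "colZ e m Z (False,i)" if "i<e" "rowsum e m i < 2" for i
      proof -
        have v: "(False,i) \<in> gcomp e m (False,i)" using that by (auto intro: gcomp_self simp: gverts_def)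
        have "gdeg e m (False,i) \<le> 1" using that by (simp add: gdeg_def)
        moreover then have "gcomp e m (False,i) \<notin> cycs e m" using v unfolding cycs_def is_cycle_comp_def by force
        ultimately show ?thesis using v by (auto simp: colZ_def)
      qed
      have colR: "\<not> colZ e m Z (True,j)" if "j<e" "colsum e m j < 2" for j
      proof
        assume c: "colZ e m Z (True,j)"
        have vg: "(True,j) \<in> gverts e" using that by (simp add: gverts_def)
        have v: "(True,j) \<in> gcomp e m (True,j)" using vg by (rule gcomp_self)
        have d: "gdeg e m (True,j) \<le> 1" using that by (simp add: gdeg_def)
        then have nc: "gcomp e m (True,j) \<notin> cycs e m" using v unfolding cycs_def is_cycle_comp_def by force
        then obtain i where i: "(False,i) \<in> gcomp e m (True,j)" "gdeg e m (False,i) \<le> 1"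
          using c by (auto simp: colZ_def)
        have "gcomp e m (True,j) \<in> gcomps e m" using vg by (simp add: gcomps_def)
        moreover have "\<not> is_cycle_comp e m (gcomp e m (True,j))" using v d unfolding is_cycle_comp_def by force
        ultimately have "is_LR_chain e m (gcomp e m (True,j))"
          using i v d unfolding is_LR_chain_def by blast
        then show False using True \<open>gcomp e m (True,j) \<in> gcomps e m\<close> by blast
      qed
      show "good e m (psi Z)" unfolding good_def psi_def using edge rowL colR by auto
    qed
    then show "psi ` Pow (cycs e m) \<subseteq> {XY. good e m XY}" by auto
    show "\<forall>XY\<in>{XY. good e m XY}. psi (phi XY) = XY"
    proof
      fix XY assume "XY \<in> {XY. good e m XY}"
      then obtain X Y where XY: "XY = (X,Y)" "good e m (X,Y)" by (cases XY) auto
      have key: "colZ e m (phi (X,Y)) v = colr X Y v" if v: "v \<in> gverts e" for v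
      proof (cases "gcomp e m v \<in> cycs e m")
        case True
        have "(\<exists>w\<in>gcomp e m v. colr X Y w) = colr X Y v"
          using good_comp[OF XY(2)] gcomp_self[OF v] by blast
        then show ?thesis using True by (simp add: colZ_def phi_def)
      next
        case False
        then have nc: "\<not> is_cycle_comp e m (gcomp e m v)" using v by (auto simp: cycs_def gcomps_def)
        obtain w where w: "w \<in> gcomp e m v" "gdeg e m w \<le> 1" using noncycle_low[OF hr hc nc] by blast
        have wv: "w \<in> gverts e" using w gcomp_sub by blast
        show ?thesis
        proof (cases "\<exists>i. (False,i) \<in> gcomp e m v \<and> gdeg e m (False,i) \<le> 1")
          case True
          then obtain i where i: "(False,i) \<in> gcomp e m v" "gdeg e m (False,i) \<le> 1" by blast
          have "colr X Y (False,i)" using low_L[OF XY(2) _ i(2)] i(1) gcomp_sub by blast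
          then have "colr X Y v" using good_comp[OF XY(2) i(1)] by simp
          then show ?thesis using True False by (simp add: colZ_def)
        next
          case F2: False
          have "fst w"
          proof (rule ccontr)
            assume "\<not> fst w"
            then have "w = (False, snd w)" by (cases w) auto
            then show False using F2 w by metis
          qed
          then obtain j where j: "w = (True,j)" by (cases w) auto
          have "\<not> colr X Y w" using low_R[OF XY(2) _ ] j w wv by blast
          then have "\<not> colr X Y v" using good_comp[OF XY(2) w(1)] by simp
          then show ?thesis using F2 False by (simp add: colZ_def)
        qed
      qed
      have "X \<subseteq> {..<e}" "Y \<subseteq> {..<e}" using XY(2) by (auto simp: good_def)
      then show "psi (phi XY) = XY" unfolding psi_def XY(1)
        using key by (auto simp: colr_def gverts_def)
    qed
  qed
  then have "card {XY. good e m XY} = card (Pow (cycs e m))" by (rule bij_betw_same_card)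
  also have "\<dots> = 2 ^ ncycles e m" using fincyc by (simp add: card_Pow ncycles_def cycs_def)
  finally show ?thesis using True by simp
qed



definition S0 :: "nat \<Rightarrow> nat set \<Rightarrow> nat set \<Rightarrow> (nat \<Rightarrow> nat \<Rightarrow> nat) set" where
  "S0 e X Y = {m. (\<forall>i j. (e \<le> i \<or> e \<le> j) \<longrightarrow> m i j = 0) \<and> (\<forall>i<e. rowsum e m i \<le> 2) \<and>
     (\<forall>j<e. colsum e m j \<le> 2) \<and> good e m (X,Y)}"

definition den :: "nat \<Rightarrow> (nat \<Rightarrow> nat \<Rightarrow> nat) \<Rightarrow> real" where
  "den e m = (\<Prod>i<e. \<Prod>j<e. fact (m i j)) * (\<Prod>i<e. fact (2 - rowsum e m i)) * (\<Prod>j<e. fact (2 - colsum e m j))"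

definition hh :: "(nat \<Rightarrow> nat \<Rightarrow> nat) \<times> (nat \<Rightarrow> nat \<Rightarrow> nat) \<Rightarrow> nat \<Rightarrow> nat \<Rightarrow> nat" where
  "hh gg = (\<lambda>i j. fst gg j i + snd gg i j)"

definition spl :: "nat \<Rightarrow> nat set \<Rightarrow> nat set \<Rightarrow> (nat \<Rightarrow> nat \<Rightarrow> nat) \<Rightarrow> (nat \<Rightarrow> nat \<Rightarrow> nat) \<times> (nat \<Rightarrow> nat \<Rightarrow> nat)" where
  "spl e X Y m = ((\<lambda>j i. if i \<in> X \<and> j \<in> Y then m i j else 0),
                  (\<lambda>i j. if i \<in> {..<e} - X \<and> j \<in> {..<e} - Y then m i j else 0))"

lemma two_const: "(\<lambda>_::nat. 2::nat) = (\<lambda>_. 2)" by simp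

context
  fixes e :: nat and X Y :: "nat set"
  assumes XY: "X \<subseteq> {..<e}" "Y \<subseteq> {..<e}"
begin

abbreviation "X' \<equiv> {..<e} - X"
abbreviation "Y' \<equiv> {..<e} - Y"
abbreviation "G1 \<equiv> Gset Y X (\<lambda>_. 2) (\<lambda>_. 2)"
abbreviation "G2 \<equiv> Gset X' Y' (\<lambda>_. 2) (\<lambda>_. 2)"

lemma finXY: "finite X" "finite Y" using XY finite_subset by auto

lemma hh_props:
  assumes g1: "g1 \<in> G1" and g2: "g2 \<in> G2"
  defines "m \<equiv> hh (g1, g2)"
  shows "\<forall>i j. (e \<le> i \<or> e \<le> j) \<longrightarrow> m i j = 0"
    and "\<And>i. i \<in> X \<Longrightarrow> rowsum e m i = (\<Sum>j\<in>Y. g1 j i)"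
    and "\<And>i. i \<in> X' \<Longrightarrow> rowsum e m i = 2"
    and "\<And>j. j \<in> Y \<Longrightarrow> colsum e m j = 2"
    and "\<And>j. j \<in> Y' \<Longrightarrow> colsum e m j = (\<Sum>i\<in>X'. g2 i j)"
    and "\<And>i j. 0 < m i j \<Longrightarrow> (i \<in> X \<and> j \<in> Y) \<or> (i \<in> X' \<and> j \<in> Y')"
    and "\<And>i j. m i j = g1 j i + g2 i j"
    and "\<And>i j. g1 j i = 0 \<or> g2 i j = 0"
proof -
  have z1: "\<And>j i. (j \<notin> Y \<or> i \<notin> X) \<Longrightarrow> g1 j i = 0" using g1 by (auto simp: Gset_def)
  have z2: "\<And>i j. (i \<notin> X' \<or> j \<notin> Y') \<Longrightarrow> g2 i j = 0" using g2 unfolding Gset_def by blast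
  have r1: "\<And>j. j \<in> Y \<Longrightarrow> (\<Sum>i\<in>X. g1 j i) = 2" using g1 by (auto simp: Gset_def)
  have r2: "\<And>i. i \<in> X' \<Longrightarrow> (\<Sum>j\<in>Y'. g2 i j) = 2" using g2 unfolding Gset_def by blast
  show "\<And>i j. m i j = g1 j i + g2 i j" by (simp add: m_def hh_def)
  show "\<forall>i j. (e \<le> i \<or> e \<le> j) \<longrightarrow> m i j = 0"
  proof (intro allI impI)
    fix i j assume "e \<le> i \<or> e \<le> j"
    then have a1: "j \<notin> Y \<or> i \<notin> X" "i \<notin> X' \<or> j \<notin> Y'" using XY by auto
    have "g1 j i = 0" using z1[of j i] a1(1) by blast
    moreover have "g2 i j = 0" using z2[of i j] a1(2) by blast
    ultimately show "m i j = 0" by (simp add: m_def hh_def)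
  qed
  show "g1 j i = 0 \<or> g2 i j = 0" for i j
  proof (cases "j \<in> Y \<and> i \<in> X")
    case True then have "i \<notin> X'" by simp
    then show ?thesis using z2[of i j] by simp
  next
    case False then show ?thesis using z1[of j i] by simp
  qed
  show "(i \<in> X \<and> j \<in> Y) \<or> (i \<in> X' \<and> j \<in> Y')" if "0 < m i j" for i j
  proof -
    have "g1 j i \<noteq> 0 \<or> g2 i j \<noteq> 0" using that by (simp add: m_def hh_def)
    then show ?thesis
    proof
      assume "g1 j i \<noteq> 0" then have "j \<in> Y \<and> i \<in> X" using z1[of j i] by auto
      then show ?thesis by simp
    next
      assume "g2 i j \<noteq> 0" then have "i \<in> X' \<and> j \<in> Y'" using z2[of i j] by auto
      then show ?thesis by blast
    qed
  qed
  have s1: "(\<Sum>j<e. g1 j i) = (\<Sum>j\<in>Y. g1 j i)" for i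
    by (rule sum.mono_neutral_right) (use XY z1 in auto)
  have s2: "(\<Sum>j<e. g2 i j) = (\<Sum>j\<in>Y'. g2 i j)" for i
    by (rule sum.mono_neutral_right) (use z2 in auto)
  have s3: "(\<Sum>i<e. g1 j i) = (\<Sum>i\<in>X. g1 j i)" for j
    by (rule sum.mono_neutral_right) (use XY z1 in auto)
  have s4: "(\<Sum>i<e. g2 i j) = (\<Sum>i\<in>X'. g2 i j)" for j
    by (rule sum.mono_neutral_right) (use z2 in auto)
  have rs: "rowsum e m i = (\<Sum>j\<in>Y. g1 j i) + (\<Sum>j\<in>Y'. g2 i j)" for i
    unfolding rowsum_def m_def hh_def by (simp add: sum.distrib s1 s2)
  have cs: "colsum e m j = (\<Sum>i\<in>X. g1 j i) + (\<Sum>i\<in>X'. g2 i j)" for j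
    unfolding colsum_def m_def hh_def by (simp add: sum.distrib s3 s4)
  show "\<And>i. i \<in> X \<Longrightarrow> rowsum e m i = (\<Sum>j\<in>Y. g1 j i)" using rs z2 by simp
  show "\<And>i. i \<in> X' \<Longrightarrow> rowsum e m i = 2" using rs z1 r2 by simp
  show "\<And>j. j \<in> Y \<Longrightarrow> colsum e m j = 2" using cs z2 r1 by simp
  show "\<And>j. j \<in> Y' \<Longrightarrow> colsum e m j = (\<Sum>i\<in>X'. g2 i j)" using cs z1 by simp
qed


lemma G1_zero: "g1 \<in> G1 \<Longrightarrow> (j \<notin> Y \<or> i \<notin> X) \<Longrightarrow> g1 j i = 0"
  unfolding Gset_def by blast
lemma G2_zero: "g2 \<in> G2 \<Longrightarrow> (i \<notin> X' \<or> j \<notin> Y') \<Longrightarrow> g2 i j = 0"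
  unfolding Gset_def by blast

lemma S0_facts:
  assumes m: "m \<in> S0 e X Y"
  shows "\<And>i j. i < e \<Longrightarrow> j < e \<Longrightarrow> 0 < m i j \<Longrightarrow> (i \<in> X \<longleftrightarrow> j \<in> Y)"
    and "\<And>i j. (e \<le> i \<or> e \<le> j) \<Longrightarrow> m i j = 0"
    and "\<And>i. i \<in> X' \<Longrightarrow> rowsum e m i = 2"
    and "\<And>j. j \<in> Y \<Longrightarrow> colsum e m j = 2"
    and "\<And>i. i < e \<Longrightarrow> rowsum e m i \<le> 2"
    and "\<And>j. j < e \<Longrightarrow> colsum e m j \<le> 2"
proof -
  have d: "\<forall>i j. (e \<le> i \<or> e \<le> j) \<longrightarrow> m i j = 0" "\<forall>i<e. rowsum e m i \<le> 2" "\<forall>j<e. colsum e m j \<le> 2"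
    "\<forall>i<e. \<forall>j<e. 0 < m i j \<longrightarrow> (i \<in> X \<longleftrightarrow> j \<in> Y)"
    "\<forall>i<e. rowsum e m i < 2 \<longrightarrow> i \<in> X" "\<forall>j<e. colsum e m j < 2 \<longrightarrow> j \<notin> Y"
    using m by (auto simp: S0_def good_def)
  show "\<And>i j. i < e \<Longrightarrow> j < e \<Longrightarrow> 0 < m i j \<Longrightarrow> (i \<in> X \<longleftrightarrow> j \<in> Y)" using d(4) by blast
  show "\<And>i j. (e \<le> i \<or> e \<le> j) \<Longrightarrow> m i j = 0" using d(1) by blast
  show "\<And>i. i < e \<Longrightarrow> rowsum e m i \<le> 2" using d(2) by blast
  show "\<And>j. j < e \<Longrightarrow> colsum e m j \<le> 2" using d(3) by blast
  show "rowsum e m i = 2" if "i \<in> X'" for i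
  proof -
    have "i < e" "i \<notin> X" using that by auto
    then show ?thesis using d(2,5) by force
  qed
  show "colsum e m j = 2" if "j \<in> Y" for j
  proof -
    have "j < e" using that XY by auto
    then show ?thesis using d(3,6) that by force
  qed
qed

lemma mixed_zero:
  assumes m: "m \<in> S0 e X Y" and "\<not> (i \<in> X \<longleftrightarrow> j \<in> Y)"
  shows "m i j = 0"
proof (cases "i < e \<and> j < e")
  case True then show ?thesis using S0_facts(1)[OF m, of i j] assms(2) by auto
next
  case False then show ?thesis using S0_facts(2)[OF m, of i j] by auto
qed

lemma spl_in:
  assumes m: "m \<in> S0 e X Y"
  shows "spl e X Y m \<in> G1 \<times> G2"
proof -
  have cY: "(\<Sum>i\<in>X. m i j) = 2" if j: "j \<in> Y" for j
  proof -
    have "colsum e m j = (\<Sum>i\<in>X. m i j)" unfolding colsum_def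
      by (rule sum.mono_neutral_right) (use XY mixed_zero[OF m] j in auto)
    then show ?thesis using S0_facts(4)[OF m j] by simp
  qed
  have rX: "(\<Sum>j\<in>Y. m i j) \<le> 2" if i: "i \<in> X" for i
  proof -
    have "(\<Sum>j\<in>Y. m i j) \<le> (\<Sum>j<e. m i j)" by (rule sum_mono2) (use XY in auto)
    also have "\<dots> \<le> 2" using S0_facts(5)[OF m, of i] i XY unfolding rowsum_def by auto
    finally show ?thesis .
  qed
  have rX': "(\<Sum>j\<in>Y'. m i j) = 2" if i: "i \<in> X'" for i
  proof -
    have "rowsum e m i = (\<Sum>j\<in>Y'. m i j)" unfolding rowsum_def
      by (rule sum.mono_neutral_right) (use mixed_zero[OF m] i in auto)
    then show ?thesis using S0_facts(3)[OF m i] by simp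
  qed
  have cY': "(\<Sum>i\<in>X'. m i j) \<le> 2" if j: "j \<in> Y'" for j
  proof -
    have "(\<Sum>i\<in>X'. m i j) \<le> (\<Sum>i<e. m i j)" by (rule sum_mono2) auto
    also have "\<dots> \<le> 2" using S0_facts(6)[OF m, of j] j unfolding colsum_def by auto
    finally show ?thesis .
  qed
  have s1: "(\<Sum>i\<in>X. (if i \<in> X \<and> j \<in> Y then m i j else 0)) = (\<Sum>i\<in>X. m i j)" if "j \<in> Y" for j
    using that by simp
  have s2: "(\<Sum>j\<in>Y. (if i \<in> X \<and> j \<in> Y then m i j else 0)) = (\<Sum>j\<in>Y. m i j)" if "i \<in> X" for i
    using that by simp
  have s3: "(\<Sum>j\<in>Y'. (if i \<in> X' \<and> j \<in> Y' then m i j else 0)) = (\<Sum>j\<in>Y'. m i j)" if "i \<in> X'" for i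
    using that by (intro sum.cong) auto
  have s4: "(\<Sum>i\<in>X'. (if i \<in> X' \<and> j \<in> Y' then m i j else 0)) = (\<Sum>i\<in>X'. m i j)" if "j \<in> Y'" for j
    using that by (intro sum.cong) auto
  show ?thesis unfolding spl_def Gset_def mem_Times_iff fst_conv snd_conv mem_Collect_eq
    using s1 s2 s3 s4 cY rX rX' cY' by auto
qed

lemma hh_spl:
  assumes m: "m \<in> S0 e X Y"
  shows "hh (spl e X Y m) = m"
proof (intro ext)
  fix i j
  show "hh (spl e X Y m) i j = m i j"
    using mixed_zero[OF m, of i j] S0_facts(2)[OF m, of i j] XY
    unfolding hh_def spl_def by auto
qed

lemma spl_hh:
  assumes "gg \<in> G1 \<times> G2"
  shows "spl e X Y (hh gg) = gg"
proof -
  obtain g1 g2 where gg: "gg = (g1,g2)" "g1 \<in> G1" "g2 \<in> G2" using assms by auto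
  have "(\<lambda>j i. if i \<in> X \<and> j \<in> Y then g1 j i + g2 i j else 0) = g1"
    using G1_zero[OF gg(2)] G2_zero[OF gg(3)] by (intro ext) auto
  moreover have "(\<lambda>i j. if i \<in> X' \<and> j \<in> Y' then g1 j i + g2 i j else 0) = g2"
    using G1_zero[OF gg(2)] G2_zero[OF gg(3)] by (intro ext) auto
  ultimately show ?thesis unfolding gg(1) spl_def hh_def fst_conv snd_conv by simp
qed

lemma hh_in:
  assumes g1: "g1 \<in> G1" and g2: "g2 \<in> G2"
  shows "hh (g1,g2) \<in> S0 e X Y"
proof -
  note H = hh_props[OF g1 g2]
  have cb: "(\<Sum>j\<in>Y. g1 j i) \<le> 2" if "i \<in> X" for i using g1 that by (auto simp: Gset_def)
  have cb2: "(\<Sum>i\<in>X'. g2 i j) \<le> 2" if "j \<in> Y'" for j using g2 that unfolding Gset_def by blast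
  have row: "rowsum e (hh (g1,g2)) i \<le> 2" if "i < e" for i
    using H(2)[of i] H(3)[of i] cb[of i] that by (cases "i \<in> X") auto
  have col: "colsum e (hh (g1,g2)) j \<le> 2" if "j < e" for j
    using H(4)[of j] H(5)[of j] cb2[of j] that by (cases "j \<in> Y") auto
  have edge: "i \<in> X \<longleftrightarrow> j \<in> Y" if "0 < hh (g1,g2) i j" for i j
    using H(6)[OF that] by auto
  have lr: "i \<in> X" if "i < e" "rowsum e (hh (g1,g2)) i < 2" for i
    using H(3)[of i] that by force
  have lc: "j \<notin> Y" if "j < e" "colsum e (hh (g1,g2)) j < 2" for j
    using H(4)[of j] that by force
  show ?thesis unfolding S0_def good_def using H(1) row col edge lr lc XY by auto
qed

lemma den_hh:
  assumes g1: "g1 \<in> G1" and g2: "g2 \<in> G2"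
  shows "den e (hh (g1,g2)) = ((\<Prod>j\<in>Y. \<Prod>i\<in>X. fact (g1 j i)) * (\<Prod>i\<in>X. fact (2 - (\<Sum>j\<in>Y. g1 j i))))
     * ((\<Prod>i\<in>X'. \<Prod>j\<in>Y'. fact (g2 i j)) * (\<Prod>j\<in>Y'. fact (2 - (\<Sum>i\<in>X'. g2 i j))))"
proof -
  note H = hh_props[OF g1 g2]
  have f: "(fact (hh (g1,g2) i j) :: real) = fact (g1 j i) * fact (g2 i j)" for i j
  proof (cases "j \<in> Y \<and> i \<in> X")
    case True then have "g2 i j = 0" using G2_zero[OF g2, of i j] by simp
    then show ?thesis by (simp add: hh_def)
  next
    case False then have "g1 j i = 0" using G1_zero[OF g1, of j i] by simp
    then show ?thesis by (simp add: hh_def)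
  qed
  have p1: "(\<Prod>i<e. \<Prod>j<e. fact (g1 j i) :: real) = (\<Prod>j\<in>Y. \<Prod>i\<in>X. fact (g1 j i))"
  proof -
    have "(\<Prod>i<e. \<Prod>j<e. fact (g1 j i) :: real) = (\<Prod>j<e. \<Prod>i<e. fact (g1 j i))" by (rule prod.swap)
    also have "\<dots> = (\<Prod>j<e. \<Prod>i\<in>X. fact (g1 j i))"
      by (intro prod.cong refl prod.mono_neutral_right) (use XY G1_zero[OF g1] in auto)
    also have "\<dots> = (\<Prod>j\<in>Y. \<Prod>i\<in>X. fact (g1 j i))"
      by (intro prod.mono_neutral_right) (use XY G1_zero[OF g1] in auto)
    finally show ?thesis .
  qed
  have p2: "(\<Prod>i<e. \<Prod>j<e. fact (g2 i j) :: real) = (\<Prod>i\<in>X'. \<Prod>j\<in>Y'. fact (g2 i j))"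
  proof -
    have "(\<Prod>i<e. \<Prod>j<e. fact (g2 i j) :: real) = (\<Prod>i<e. \<Prod>j\<in>Y'. fact (g2 i j))"
      by (intro prod.cong refl prod.mono_neutral_right) (use G2_zero[OF g2] in auto)
    also have "\<dots> = (\<Prod>i\<in>X'. \<Prod>j\<in>Y'. fact (g2 i j))"
      by (intro prod.mono_neutral_right) (use G2_zero[OF g2] in auto)
    finally show ?thesis .
  qed
  have p3: "(\<Prod>i<e. fact (2 - rowsum e (hh (g1,g2)) i) :: real) = (\<Prod>i\<in>X. fact (2 - (\<Sum>j\<in>Y. g1 j i)))"
  proof -
    have "(\<Prod>i<e. fact (2 - rowsum e (hh (g1,g2)) i) :: real) = (\<Prod>i\<in>X. fact (2 - rowsum e (hh (g1,g2)) i))"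
      by (intro prod.mono_neutral_right) (use XY H(3) in auto)
    also have "\<dots> = (\<Prod>i\<in>X. fact (2 - (\<Sum>j\<in>Y. g1 j i)))"
      by (intro prod.cong refl) (use H(2) in auto)
    finally show ?thesis .
  qed
  have p4: "(\<Prod>j<e. fact (2 - colsum e (hh (g1,g2)) j) :: real) = (\<Prod>j\<in>Y'. fact (2 - (\<Sum>i\<in>X'. g2 i j)))"
  proof -
    have "(\<Prod>j<e. fact (2 - colsum e (hh (g1,g2)) j) :: real) = (\<Prod>j\<in>Y'. fact (2 - colsum e (hh (g1,g2)) j))"
      by (intro prod.mono_neutral_right) (use H(4) in auto)
    also have "\<dots> = (\<Prod>j\<in>Y'. fact (2 - (\<Sum>i\<in>X'. g2 i j)))"
      by (intro prod.cong refl) (use H(5) in auto)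
    finally show ?thesis .
  qed
  have "(\<Prod>i<e. \<Prod>j<e. fact (hh (g1,g2) i j) :: real) = (\<Prod>i<e. \<Prod>j<e. fact (g1 j i)) * (\<Prod>i<e. \<Prod>j<e. fact (g2 i j))"
    unfolding f by (simp add: prod.distrib)
  then show ?thesis unfolding den_def p3 p4 using p1 p2 by simp
qed

lemma S0_sum:
  "(\<Sum>m\<in>S0 e X Y. 1 / den e m) = (\<Sum>g\<in>G1. wB Y X (\<lambda>_. 2) g) * (\<Sum>g\<in>G2. wB X' Y' (\<lambda>_. 2) g)"
proof -
  have "(\<Sum>g\<in>G1. wB Y X (\<lambda>_. 2) g) * (\<Sum>g\<in>G2. wB X' Y' (\<lambda>_. 2) g)
     = (\<Sum>gg\<in>G1 \<times> G2. wB Y X (\<lambda>_. 2) (fst gg) * wB X' Y' (\<lambda>_. 2) (snd gg))"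
    by (simp add: sum_product sum.cartesian_product case_prod_unfold)
  also have "\<dots> = (\<Sum>m\<in>S0 e X Y. 1 / den e m)"
  proof (rule sum.reindex_bij_witness[where i="spl e X Y" and j="hh"])
    fix gg assume gg: "gg \<in> G1 \<times> G2"
    then obtain g1 g2 where g: "gg = (g1,g2)" "g1 \<in> G1" "g2 \<in> G2" by auto
    show "spl e X Y (hh gg) = gg" using spl_hh[OF gg] .
    show "hh gg \<in> S0 e X Y" using hh_in[OF g(2,3)] g(1) by simp
    show "1 / den e (hh gg) = wB Y X (\<lambda>_. 2) (fst gg) * wB X' Y' (\<lambda>_. 2) (snd gg)"
      unfolding g(1) den_hh[OF g(2,3)] wB_def by simp
  next
    fix m assume m: "m \<in> S0 e X Y"
    show "hh (spl e X Y m) = m" using hh_spl[OF m] .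
    show "spl e X Y m \<in> G1 \<times> G2" using spl_in[OF m] .
  qed
  finally show ?thesis by simp
qed

lemma S0_total:
  assumes m: "m \<in> S0 e X Y"
  shows "(\<Sum>i<e. \<Sum>j<e. m i j) = 2 * card Y + 2 * (e - card X)"
proof -
  obtain g1 g2 where g: "spl e X Y m = (g1,g2)" "g1 \<in> G1" "g2 \<in> G2" using spl_in[OF m] by (cases "spl e X Y m") auto
  have mh: "m = hh (g1,g2)" using hh_spl[OF m] g(1) by simp
  note H = hh_props[OF g(2,3)]
  have "(\<Sum>i<e. \<Sum>j<e. m i j) = (\<Sum>i<e. rowsum e m i)" by (simp add: rowsum_def)
  also have "\<dots> = (\<Sum>i\<in>X'. rowsum e m i) + (\<Sum>i\<in>X. rowsum e m i)"
    by (rule sum.subset_diff) (use XY in auto)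
  also have "(\<Sum>i\<in>X'. rowsum e m i) = (\<Sum>i\<in>X'. 2)" unfolding mh by (rule sum.cong) (use H(3) in auto)
  also have "(\<Sum>i\<in>X. rowsum e m i) = (\<Sum>i\<in>X. \<Sum>j\<in>Y. g1 j i)" unfolding mh by (rule sum.cong) (use H(2) in auto)
  also have "\<dots> = (\<Sum>j\<in>Y. \<Sum>i\<in>X. g1 j i)" by (rule sum.swap)
  also have "\<dots> = (\<Sum>j\<in>Y. 2)" by (rule sum.cong) (use g(2) in \<open>auto simp: Gset_def\<close>)
  finally show ?thesis using XY finXY by (simp add: card_Diff_subset)
qed

end


definition adm0 :: "nat \<Rightarrow> nat \<Rightarrow> (nat \<Rightarrow> nat \<Rightarrow> nat) set" where
  "adm0 e p = {m. (\<forall>i j. (e \<le> i \<or> e \<le> j) \<longrightarrow> m i j = 0) \<and> (\<Sum>i<e. \<Sum>j<e. m i j) = 2 * p \<and>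
     (\<forall>i<e. rowsum e m i \<le> 2) \<and> (\<forall>j<e. colsum e m j \<le> 2)}"

lemma finite_adm0: "finite (adm0 e p)"
proof -
  have "adm0 e p \<subseteq> {g. \<forall>a b. ((a \<notin> {..<e} \<or> b \<notin> {..<e}) \<longrightarrow> g a b = 0) \<and> g a b \<le> 2}"
  proof -
    have "((a \<notin> {..<e} \<or> b \<notin> {..<e}) \<longrightarrow> m a b = 0) \<and> m a b \<le> 2" if m: "m \<in> adm0 e p" for m a b
    proof -
    have z: "\<forall>i j. (e \<le> i \<or> e \<le> j) \<longrightarrow> m i j = 0" and r: "\<forall>i<e. rowsum e m i \<le> 2"
      using m by (auto simp: adm0_def)
    have "m a b \<le> 2"
    proof (cases "a < e \<and> b < e")
      case True
      then have "m a b \<le> rowsum e m a" unfolding rowsum_def by (intro member_le_sum) auto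
      then show ?thesis using r True by (meson order_trans)
    next
      case False then show ?thesis using z by (metis not_le zero_le)
    qed
    then show ?thesis using z by auto
    qed
    then show ?thesis by blast
  qed
  then show ?thesis using finite_mats[of "{..<e}" "{..<e}" 2] by (rule finite_subset) auto
qed

definition c0 :: "nat \<Rightarrow> nat \<Rightarrow> real" where "c0 e p = fact (2*p) * 2^(2*e - 2*p)"

definition PP :: "nat \<Rightarrow> (nat set \<times> nat set) set" where "PP e = Pow {..<e} \<times> Pow {..<e}"

lemma finite_PP: "finite (PP e)" by (simp add: PP_def)

lemma good_PP: "good e m XY \<Longrightarrow> XY \<in> PP e"
  by (cases XY) (auto simp: good_def PP_def)

lemma NI_step1:
  "NI e p = (\<Sum>XY\<in>PP e. \<Sum>m\<in>{m \<in> adm0 e p. good e m XY}. c0 e p / den e m)"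
proof -
  have adm: "admissible e p = {m \<in> adm0 e p. \<forall>K\<in>gcomps e m. \<not> is_LR_chain e m K}"
    by (auto simp: admissible_def adm0_def)
  have "NI e p = (\<Sum>m\<in>admissible e p. c0 e p * 2 ^ ncycles e m / den e m)"
    unfolding NI_def den_def c0_def by (simp add: power_add mult.assoc)
  also have "\<dots> = (\<Sum>m\<in>adm0 e p. if \<forall>K\<in>gcomps e m. \<not> is_LR_chain e m K then c0 e p * 2 ^ ncycles e m / den e m else 0)"
    unfolding adm by (rule sum.inter_filter[OF finite_adm0])
  also have "\<dots> = (\<Sum>m\<in>adm0 e p. c0 e p / den e m * real (card {XY. good e m XY}))"
  proof (rule sum.cong[OF refl])
    fix m assume "m \<in> adm0 e p"
    then have "\<forall>i<e. rowsum e m i \<le> 2" "\<forall>j<e. colsum e m j \<le> 2" by (auto simp: adm0_def)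
    from good_count[OF this] show "(if \<forall>K\<in>gcomps e m. \<not> is_LR_chain e m K then c0 e p * 2 ^ ncycles e m / den e m else 0)
      = c0 e p / den e m * real (card {XY. good e m XY})" by simp
  qed
  also have "\<dots> = (\<Sum>m\<in>adm0 e p. \<Sum>XY\<in>{XY \<in> PP e. good e m XY}. c0 e p / den e m)"
  proof (rule sum.cong[OF refl])
    fix m
    have "{XY. good e m XY} = {XY \<in> PP e. good e m XY}" using good_PP by blast
    then show "c0 e p / den e m * real (card {XY. good e m XY}) = (\<Sum>XY\<in>{XY \<in> PP e. good e m XY}. c0 e p / den e m)"
      by simp
  qed
  also have "\<dots> = (\<Sum>XY\<in>PP e. \<Sum>m\<in>{m \<in> adm0 e p. good e m XY}. c0 e p / den e m)"
    by (rule sum.swap_restrict[OF finite_adm0 finite_PP])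
  finally show ?thesis .
qed

definition Hc :: "nat \<Rightarrow> nat \<Rightarrow> nat \<Rightarrow> nat \<Rightarrow> real" where
  "Hc e p a r = (if r + (e - a) = p then c0 e p *
      (if 2*r \<le> 2*a then fact (2*a) / (fact (2*a - 2*r) * 2^a * 2^r) else 0) *
      (if 2*(e-a) \<le> 2*(e-r) then fact (2*(e-r)) / (fact (2*(e-r) - 2*(e-a)) * 2^(e-r) * 2^(e-a)) else 0)
    else 0)"

lemma inner_sum:
  assumes XY: "X \<subseteq> {..<e}" "Y \<subseteq> {..<e}"
  shows "(\<Sum>m\<in>{m \<in> adm0 e p. good e m (X,Y)}. c0 e p / den e m) = Hc e p (card X) (card Y)"
proof -
  have fin: "finite X" "finite Y" using XY finite_subset by auto
  have cX': "card ({..<e} - X) = e - card X" "card ({..<e} - Y) = e - card Y"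
    using XY fin by (simp_all add: card_Diff_subset)
  have set: "{m \<in> adm0 e p. good e m (X,Y)} = {m \<in> S0 e X Y. (\<Sum>i<e. \<Sum>j<e. m i j) = 2 * p}"
    by (auto simp: adm0_def S0_def)
  have B1: "(\<Sum>g\<in>Gset Y X (\<lambda>_. 2) (\<lambda>_. 2). wB Y X (\<lambda>_. 2) g)
      = (if 2*card Y \<le> 2*card X then fact (2*card X) / (fact (2*card X - 2*card Y) * 2^card X * 2^card Y) else 0)"
    using block_sum[OF fin(2) fin(1), of "\<lambda>_. 2" "\<lambda>_. 2"] by (simp add: mult.commute)
  have B2: "(\<Sum>g\<in>Gset ({..<e} - X) ({..<e} - Y) (\<lambda>_. 2) (\<lambda>_. 2). wB ({..<e} - X) ({..<e} - Y) (\<lambda>_. 2) g)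
      = (if 2*(e - card X) \<le> 2*(e - card Y) then fact (2*(e - card Y)) / (fact (2*(e - card Y) - 2*(e - card X)) * 2^(e - card Y) * 2^(e - card X)) else 0)"
    using block_sum[of "{..<e} - X" "{..<e} - Y" "\<lambda>_. 2" "\<lambda>_. 2"] cX' by (simp add: mult.commute)
  show ?thesis
  proof (cases "card Y + (e - card X) = p")
    case True
    then have "{m \<in> adm0 e p. good e m (X,Y)} = S0 e X Y" unfolding set using S0_total[OF XY] by auto
    then have "(\<Sum>m\<in>{m \<in> adm0 e p. good e m (X,Y)}. c0 e p / den e m) = c0 e p * (\<Sum>m\<in>S0 e X Y. 1 / den e m)"
      by (simp add: sum_distrib_left)
    also have "\<dots> = Hc e p (card X) (card Y)"
      unfolding S0_sum[OF XY] B1 B2 Hc_def using True by simp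
    finally show ?thesis .
  next
    case False
    then have E: "{m \<in> adm0 e p. good e m (X,Y)} = {}" unfolding set using S0_total[OF XY] by auto
    show ?thesis unfolding E using False by (simp add: Hc_def)
  qed
qed

lemma sum_rev: "(\<Sum>i\<le>n. g i) = (\<Sum>i\<le>n. g (n - i))" for n :: nat and g :: "nat \<Rightarrow> real"
  by (rule sum.reindex_bij_witness[where i="\<lambda>i. n - i" and j="\<lambda>i. n - i"]) auto

lemma pow_card_sum: "(\<Sum>X\<in>Pow {..<e}. f (card X)) = (\<Sum>k\<le>e. real (e choose k) * f k)"
proof -
  have "(\<Sum>X\<in>Pow {..<e}. f (card X)) = (\<Sum>k\<le>e. \<Sum>X\<in>{X \<in> Pow {..<e}. card X = k}. f (card X))"
    by (rule sum.group[symmetric]) (auto intro: card_mono[of "{..<e}", simplified])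
  also have "\<dots> = (\<Sum>k\<le>e. real (e choose k) * f k)"
  proof (rule sum.cong[OF refl])
    fix k
    have "{X \<in> Pow {..<e}. card X = k} = {B. B \<subseteq> {..<e} \<and> card B = k}" by auto
    then have "card {X \<in> Pow {..<e}. card X = k} = e choose k" using n_subsets[of "{..<e}" k] by simp
    moreover have "(\<Sum>X\<in>{X \<in> Pow {..<e}. card X = k}. f (card X)) = (\<Sum>X\<in>{X \<in> Pow {..<e}. card X = k}. f k)"
      by (rule sum.cong) auto
    ultimately show "(\<Sum>X\<in>{X \<in> Pow {..<e}. card X = k}. f (card X)) = real (e choose k) * f k" by simp
  qed
  finally show ?thesis .
qed

lemma Hc_val:
  assumes "k \<le> p" "p \<le> e"
  shows "Hc e p (e-p+k) k = c0 e p * (fact (2*(e-p+k)) * fact (2*(e-k))) / (fact (2*e-2*p)^2 * 4^e)"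
proof -
  have a: "k + (e - (e-p+k)) = p" "2*k \<le> 2*(e-p+k)" "2*(e-(e-p+k)) \<le> 2*(e-k)"
     "2*(e-p+k) - 2*k = 2*e-2*p" "2*(e-k) - 2*(e-(e-p+k)) = 2*e-2*p"
    using assms by auto
  have pw: "(2::real)^(e-p+k) * 2^k * (2^(e-k) * 2^(e-(e-p+k))) = 4^e"
  proof -
    have "(e-p+k) + k + ((e-k) + (e-(e-p+k))) = 2*e" using assms by auto
    then have "(2::real)^(e-p+k) * 2^k * (2^(e-k) * 2^(e-(e-p+k))) = 2^(2*e)"
      by (metis power_add)
    then show ?thesis by (simp add: power_mult)
  qed
  show ?thesis unfolding Hc_def using a pw
    by (simp add: field_simps power2_eq_square)
qed

lemma NI_formula:
  assumes pe: "p \<le> e"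
  shows "NI e p = c0 e p / (fact (2*e-2*p)^2 * 4^e) *
     (\<Sum>k\<le>p. real (e choose k) * real (e choose (p-k)) * fact (2*(e-k)) * fact (2*(e-p+k)))"
proof -
  have "NI e p = (\<Sum>XY\<in>PP e. Hc e p (card (fst XY)) (card (snd XY)))"
    unfolding NI_step1 by (rule sum.cong[OF refl]) (auto simp: PP_def intro!: inner_sum)
  also have "\<dots> = (\<Sum>X\<in>Pow {..<e}. \<Sum>Y\<in>Pow {..<e}. Hc e p (card X) (card Y))"
    unfolding PP_def by (simp add: sum.cartesian_product case_prod_unfold)
  also have "\<dots> = (\<Sum>X\<in>Pow {..<e}. \<Sum>r\<le>e. real (e choose r) * Hc e p (card X) r)"
    by (simp add: pow_card_sum)
  also have "\<dots> = (\<Sum>a\<le>e. real (e choose a) * (\<Sum>r\<le>e. real (e choose r) * Hc e p a r))"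
    by (rule pow_card_sum)
  also have "\<dots> = (\<Sum>a\<le>e. real (e choose a) * (if e - a \<le> p then real (e choose (p - (e-a))) * Hc e p a (p - (e-a)) else 0))"
  proof (rule sum.cong[OF refl])
    fix a assume "a \<in> {..e}"
    have "(\<Sum>r\<le>e. real (e choose r) * Hc e p a r)
       = (\<Sum>r\<le>e. if r = p - (e-a) then (if e - a \<le> p then real (e choose r) * Hc e p a r else 0) else 0)"
      by (rule sum.cong[OF refl]) (auto simp: Hc_def)
    also have "\<dots> = (if e - a \<le> p then real (e choose (p - (e-a))) * Hc e p a (p - (e-a)) else 0)"
      using pe by simp
    finally show "real (e choose a) * (\<Sum>r\<le>e. real (e choose r) * Hc e p a r) =
      real (e choose a) * (if e - a \<le> p then real (e choose (p - (e-a))) * Hc e p a (p - (e-a)) else 0)" by simp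
  qed
  also have "\<dots> = (\<Sum>j\<le>e. if j \<le> p then real (e choose (e-j)) * (real (e choose (p-j)) * Hc e p (e-j) (p-j)) else 0)"
    by (subst sum_rev) (rule sum.cong[OF refl], auto)
  also have "\<dots> = (\<Sum>j\<in>{j \<in> {..e}. j \<le> p}. real (e choose (e-j)) * (real (e choose (p-j)) * Hc e p (e-j) (p-j)))"
    by (rule sum.inter_filter[symmetric]) simp
  also have "{j \<in> {..e}. j \<le> p} = {..p}" using pe by auto
  also have "(\<Sum>j\<le>p. real (e choose (e-j)) * (real (e choose (p-j)) * Hc e p (e-j) (p-j)))
     = (\<Sum>k\<le>p. real (e choose (e-(p-k))) * (real (e choose (p-(p-k))) * Hc e p (e-(p-k)) (p-(p-k))))"
    by (rule sum_rev)
  also have "\<dots> = (\<Sum>k\<le>p. c0 e p / (fact (2*e-2*p)^2 * 4^e) *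
     (real (e choose k) * real (e choose (p-k)) * fact (2*(e-k)) * fact (2*(e-p+k))))"
  proof (rule sum.cong[OF refl])
    fix k assume "k \<in> {..p}"
    then have k: "k \<le> p" by simp
    have e1: "e-(p-k) = e-p+k" "p-(p-k) = k" using k pe by auto
    have e2: "e choose (e-p+k) = e choose (p-k)"
      using binomial_symmetric[of "e-p+k" e] k pe by (simp add: e1)
    show "real (e choose (e-(p-k))) * (real (e choose (p-(p-k))) * Hc e p (e-(p-k)) (p-(p-k))) =
      c0 e p / (fact (2*e-2*p)^2 * 4^e) * (real (e choose k) * real (e choose (p-k)) * fact (2*(e-k)) * fact (2*(e-p+k)))"
      unfolding e1 e2 Hc_val[OF k pe] by (simp add: field_simps)
  qed
  finally show ?thesis by (simp add: sum_distrib_left)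
qed

theorem mainTheorem11:
  fixes e p :: nat
  assumes "1 \<le> e" and "p \<le> e"
  shows "NI e p = (fact (2*e))^2 / (fact (2*e - 2*p))^2 * NII e e p"
proof -
  have pe: "p \<le> e" by fact
  have "NI e p = c0 e p / (fact (2*e-2*p)^2 * 4^e) *
     (4^p * fact e^2 * fact (2*e-p) * fact (2*e-2*p) / (fact p * fact (e-p)^2))"
    unfolding NI_formula[OF pe] identD[OF pe] ..
  also have "\<dots> = fact (2*p) * fact e^2 * fact (2*e-p) / (fact p * fact (e-p)^2 * fact (2*e-2*p))"
  proof -
    have "(2::real)^(2*e-2*p) * 4^p = 4^e"
    proof -
      have "(2::real)^(2*e-2*p) * 4^p = 4^(e-p) * 4^p" by (simp add: power_mult diff_mult_distrib2[symmetric])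
      also have "\<dots> = 4^e" using pe by (simp add: power_add[symmetric])
      finally show ?thesis .
    qed
    then show ?thesis unfolding c0_def by (simp add: field_simps power2_eq_square)
  qed
  also have "\<dots> = (fact (2*e))^2 / (fact (2*e - 2*p))^2 * NII e e p"
  proof -
    have "e + e - p = 2*e-p" "e + e - 2*p = 2*e-2*p" "2*e-2*p = 2*(e-p)" by auto
    then show ?thesis unfolding NII_def by (simp add: field_simps power2_eq_square)
  qed
  finally show ?thesis .
qed

end
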